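(* Let $g=\{g_n\}_{n=1}^\infty$ be a sequence of positive numbers such that $(-\Delta_0 g)_n:=2g_n-g_{n-1}-g_{n+1}\ge0$ for all $n\in\mathbb{N}$ (with $g_0:=0$), and set $w_n:=(-\Delta_0g)_n/g_n$. Then for every finitely supported sequence $u=\{u_n\}_{n=0}^\infty$ with $u_0=0$, \[ \sum_{n=1}^\infty|u_n-u_{n-1}|^2=\sum_{n=1}^\infty w_n|u_n|^2+\sum_{n=2}^\infty\Big|\sqrt{\tfrac{g_{n-1}}{g_n}}\,u_n-\sqrt{\tfrac{g_n}{g_{n-1}}}\,u_{n-1}\Big|^2. \] In particular $\sum_{n=1}^\infty w_n|u_n|^2\le\sum_{n=1}^\infty|u_n-u_{n-1}|^2$ for all such $u$. Moreover, if there exist finitely supported sequences $\xi^N=\{\xi^N_n\}_{n=1}^\infty$, $N\in\mathbb{N}$, with $\xi^N\le\xi^{N+1}$ pointwise, $\xi^N_n\to1$ as $N\to\infty$ for every $n$, and \[ \lim_{N\to\infty}\sum_{n=2}^\infty g_ng_{n-1}|\xi^N_n-\xi^N_{n-1}|^2=0, \] then $w$ is an optimal Hardy weight.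
   Context: $\mathbb{N}=\{1,2,\dots\}$. A Hardy weight (for the discrete Dirichlet Laplacian) is a sequence $\tilde w=\{\tilde w_n\}_{n\ge1}$ with $\tilde w_n\ge0$ such that $\sum_{n\ge1}\tilde w_n|u_n|^2\le\sum_{n\ge1}|u_n-u_{n-1}|^2$ for all finitely supported $\{u_n\}_{n\ge0}$ with $u_0=0$. A Hardy weight $w$ is optimal if for every Hardy weight $\tilde w$ with $\tilde w_n\ge w_n$ for all $n$, one has $\tilde w=w$. *)

theory Defs
  imports "HOL-Analysis.Analysis"
begin

text \<open>Sequences u = (u_n)_{n \<ge> 0} are functions nat \<Rightarrow> complex; weights w = (w_n)_{n \<ge> 1}
  are functions nat \<Rightarrow> real whose value at 0 is irrelevant.\<close>

definition fin_supp :: "(nat \<Rightarrow> 'a::zero) \<Rightarrow> bool" where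
  "fin_supp u \<longleftrightarrow> finite {n. u n \<noteq> 0}"

definition hardy_weight :: "(nat \<Rightarrow> real) \<Rightarrow> bool" where
  "hardy_weight w \<longleftrightarrow> (\<forall>n\<ge>1. 0 \<le> w n) \<and>
     (\<forall>u::nat \<Rightarrow> complex. fin_supp u \<and> u 0 = 0 \<longrightarrow>
        (\<Sum>n. w (Suc n) * (cmod (u (Suc n)))\<^sup>2) \<le> (\<Sum>n. (cmod (u (Suc n) - u n))\<^sup>2))"

definition optimal_hardy_weight :: "(nat \<Rightarrow> real) \<Rightarrow> bool" where
  "optimal_hardy_weight w \<longleftrightarrow> hardy_weight w \<and>
     (\<forall>w'. hardy_weight w' \<and> (\<forall>n\<ge>1. w n \<le> w' n) \<longrightarrow> (\<forall>n\<ge>1. w' n = w n))"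

end

theory Submission
  imports Defs
begin

lemma pt_id:
  fixes a0 b0 a1 b1 a2 b2 g0 g1 g2 p q :: real
  assumes "g1 > 0" "g2 > 0" "p*p = g1/g2" "q*q = g2/g1" "p*q = 1"
  shows "(a1-a0)^2+(b1-b0)^2 = (2*g1-g0-g2)/g1*(a1^2+b1^2) + ((p*a2 - q*a1)^2 + (p*b2 - q*b1)^2)
     + ((a0^2+b0^2 + g0/g1*(a1^2+b1^2) - 2*(a1*a0+b1*b0))
        - (a1^2+b1^2 + g1/g2*(a2^2+b2^2) - 2*(a2*a1+b2*b1)))"
proof -
  have e: "(p*a2 - q*a1)^2 + (p*b2 - q*b1)^2 = (p*p)*(a2^2+b2^2) + (q*q)*(a1^2+b1^2) - 2*(p*q)*(a1*a2+b1*b2)"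
    by (simp add: power2_eq_square algebra_simps)
  show ?thesis unfolding e assms(3,4,5) using assms(1,2)
    by (simp add: field_simps power2_eq_square)
qed

lemma suminf_bounded_supp:
  fixes f :: "nat \<Rightarrow> real"
  assumes "\<And>n. n \<ge> M \<Longrightarrow> f n = 0"
  shows "suminf f = (\<Sum>n<M. f n)"
  by (rule suminf_finite) (auto intro: assms)

lemma ground:
  fixes g w :: "nat \<Rightarrow> real" and u :: "nat \<Rightarrow> complex"
  assumes g0: "g 0 = 0"
    and gpos: "\<forall>n\<ge>1. 0 < g n"
    and w_def: "\<forall>n\<ge>1. w n = (2 * g n - g (n - 1) - g (n + 1)) / g n"
    and fs: "fin_supp u" and u0: "u 0 = 0"
  shows "(\<Sum>n. (cmod (u (Suc n) - u n))\<^sup>2)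
             = (\<Sum>n. w (Suc n) * (cmod (u (Suc n)))\<^sup>2)
               + (\<Sum>n. (cmod (complex_of_real (sqrt (g (n + 1) / g (n + 2))) * u (n + 2)
                          - complex_of_real (sqrt (g (n + 2) / g (n + 1))) * u (n + 1)))\<^sup>2)"
    and "(\<Sum>n. (cmod (complex_of_real (sqrt (g (n + 1) / g (n + 2))) * u (n + 2)
                          - complex_of_real (sqrt (g (n + 2) / g (n + 1))) * u (n + 1)))\<^sup>2) \<ge> 0"
proof -
  define D where "D n = (cmod (u (Suc n) - u n))\<^sup>2" for n
  define W where "W n = w (Suc n) * (cmod (u (Suc n)))\<^sup>2" for n
  define T where "T n = (cmod (complex_of_real (sqrt (g (n + 1) / g (n + 2))) * u (n + 2)
                          - complex_of_real (sqrt (g (n + 2) / g (n + 1))) * u (n + 1)))\<^sup>2" for n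
  define h where "h n = (cmod (u n))\<^sup>2 + g n / g (n+1) * (cmod (u (n+1)))\<^sup>2
      - 2 * (Re (u (n+1)) * Re (u n) + Im (u (n+1)) * Im (u n))" for n
  have pw: "D n = W n + T n + (h n - h (Suc n))" for n
  proof -
    have g1: "g (n+1) > 0" and g2: "g (n+2) > 0" using gpos by auto
    have wn: "w (Suc n) = (2 * g (n+1) - g n - g (n+2)) / g (n+1)"
      using w_def[rule_format, of "Suc n"] by (simp add: numeral_2_eq_2)
    let ?p = "sqrt (g (n + 1) / g (n + 2))" and ?q = "sqrt (g (n + 2) / g (n + 1))"
    have pp: "?p * ?p = g (n+1) / g (n+2)" using g1 g2 by simp
    have qq: "?q * ?q = g (n+2) / g (n+1)" using g1 g2 by simp
    have pq: "?p * ?q = 1" using g1 g2 by (simp add: real_sqrt_mult[symmetric])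
    note E = pt_id[OF g1 g2 pp qq pq, of "Re (u (n+1))" "Re (u n)" "Im (u (n+1))" "Im (u n)" "g n"
        "Re (u (n+2))" "Im (u (n+2))"]
    have dD: "D n = (Re (u (n+1)) - Re (u n))^2 + (Im (u (n+1)) - Im (u n))^2"
      unfolding D_def cmod_power2 by simp
    have dW: "W n = (2 * g (n+1) - g n - g (n+2)) / g (n+1) * ((Re (u (n+1)))^2 + (Im (u (n+1)))^2)"
      unfolding W_def cmod_power2 wn by simp
    have dT: "T n = (?p * Re (u (n+2)) - ?q * Re (u (n+1)))^2 + (?p * Im (u (n+2)) - ?q * Im (u (n+1)))^2"
      unfolding T_def cmod_power2 by simp
    have dh1: "h (Suc n) = (Re (u (n+1)))^2 + (Im (u (n+1)))^2 + g (n+1) / g (n+2) * ((Re (u (n+2)))^2 + (Im (u (n+2)))^2)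
       - 2 * (Re (u (n+2)) * Re (u (n+1)) + Im (u (n+2)) * Im (u (n+1)))"
      unfolding h_def cmod_power2 by (simp add: numeral_2_eq_2)
    have dh0: "h n = (Re (u n))^2 + (Im (u n))^2 + g n / g (n+1) * ((Re (u (n+1)))^2 + (Im (u (n+1)))^2)
       - 2 * (Re (u (n+1)) * Re (u n) + Im (u (n+1)) * Im (u n))"
      unfolding h_def cmod_power2 by simp
    show ?thesis unfolding dD dW dT dh1 dh0 by (rule E)
  qed
  from fs have "finite {n. u n \<noteq> 0}" unfolding fin_supp_def .
  then obtain M where M: "{n. u n \<noteq> 0} \<subseteq> {..<M}" using finite_nat_iff_bounded by blast
  have uz: "u n = 0" if "n \<ge> M" for n using M that by force
  have sD: "(\<Sum>n. D n) = (\<Sum>n<M. D n)"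
    by (rule suminf_bounded_supp) (simp add: D_def uz)
  have sW: "(\<Sum>n. W n) = (\<Sum>n<M. W n)"
    by (rule suminf_bounded_supp) (simp add: W_def uz)
  have sT: "(\<Sum>n. T n) = (\<Sum>n<M. T n)"
    by (rule suminf_bounded_supp) (simp add: T_def uz)
  have h0: "h 0 = 0" by (simp add: h_def u0 g0)
  have hM: "h M = 0" by (simp add: h_def uz)
  have "(\<Sum>n<M. D n) = (\<Sum>n<M. W n) + (\<Sum>n<M. T n) + (\<Sum>n<M. h n - h (Suc n))"
    by (simp add: pw sum.distrib)
  also have "(\<Sum>n<M. h n - h (Suc n)) = 0" by (simp add: sum_lessThan_telescope' h0 hM)
  finally have "(\<Sum>n. D n) = (\<Sum>n. W n) + (\<Sum>n. T n)" using sD sW sT by simp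
  then show "(\<Sum>n. (cmod (u (Suc n) - u n))\<^sup>2)
             = (\<Sum>n. w (Suc n) * (cmod (u (Suc n)))\<^sup>2)
               + (\<Sum>n. (cmod (complex_of_real (sqrt (g (n + 1) / g (n + 2))) * u (n + 2)
                          - complex_of_real (sqrt (g (n + 2) / g (n + 1))) * u (n + 1)))\<^sup>2)"
    unfolding D_def W_def T_def .
  have "(\<Sum>n<M. T n) \<ge> 0" by (rule sum_nonneg) (simp add: T_def)
  then show "(\<Sum>n. (cmod (complex_of_real (sqrt (g (n + 1) / g (n + 2))) * u (n + 2)
                          - complex_of_real (sqrt (g (n + 2) / g (n + 1))) * u (n + 1)))\<^sup>2) \<ge> 0"
    using sT unfolding T_def by simp
qed

theorem theorem4p3:
  fixes g w :: "nat \<Rightarrow> real"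
  assumes g0: "g 0 = 0"
    and gpos: "\<forall>n\<ge>1. 0 < g n"
    and superharm: "\<forall>n\<ge>1. 2 * g n - g (n - 1) - g (n + 1) \<ge> 0"
    and w_def: "\<forall>n\<ge>1. w n = (2 * g n - g (n - 1) - g (n + 1)) / g n"
  shows "(\<forall>u::nat \<Rightarrow> complex. fin_supp u \<and> u 0 = 0 \<longrightarrow>
           (\<Sum>n. (cmod (u (Suc n) - u n))\<^sup>2)
             = (\<Sum>n. w (Suc n) * (cmod (u (Suc n)))\<^sup>2)
               + (\<Sum>n. (cmod (complex_of_real (sqrt (g (n + 1) / g (n + 2))) * u (n + 2)
                          - complex_of_real (sqrt (g (n + 2) / g (n + 1))) * u (n + 1)))\<^sup>2))
       \<and> (\<forall>u::nat \<Rightarrow> complex. fin_supp u \<and> u 0 = 0 \<longrightarrow>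
           (\<Sum>n. w (Suc n) * (cmod (u (Suc n)))\<^sup>2) \<le> (\<Sum>n. (cmod (u (Suc n) - u n))\<^sup>2))
       \<and> ((\<exists>\<xi> :: nat \<Rightarrow> nat \<Rightarrow> real.
              (\<forall>N\<ge>1. finite {n. n \<ge> 1 \<and> \<xi> N n \<noteq> 0})
            \<and> (\<forall>N\<ge>1. \<forall>n\<ge>1. \<xi> N n \<le> \<xi> (Suc N) n)
            \<and> (\<forall>n\<ge>1. (\<lambda>N. \<xi> N n) \<longlonglongrightarrow> 1)
            \<and> (\<lambda>N. \<Sum>n. g (n + 2) * g (n + 1) * (\<xi> N (n + 2) - \<xi> N (n + 1))\<^sup>2) \<longlonglongrightarrow> 0)
          \<longrightarrow> optimal_hardy_weight w)"
proof -
  have P1: "\<forall>u::nat \<Rightarrow> complex. fin_supp u \<and> u 0 = 0 \<longrightarrow>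
           (\<Sum>n. (cmod (u (Suc n) - u n))\<^sup>2)
             = (\<Sum>n. w (Suc n) * (cmod (u (Suc n)))\<^sup>2)
               + (\<Sum>n. (cmod (complex_of_real (sqrt (g (n + 1) / g (n + 2))) * u (n + 2)
                          - complex_of_real (sqrt (g (n + 2) / g (n + 1))) * u (n + 1)))\<^sup>2)"
    using ground(1)[OF g0 gpos w_def] by blast
  have P2: "\<forall>u::nat \<Rightarrow> complex. fin_supp u \<and> u 0 = 0 \<longrightarrow>
           (\<Sum>n. w (Suc n) * (cmod (u (Suc n)))\<^sup>2) \<le> (\<Sum>n. (cmod (u (Suc n) - u n))\<^sup>2)"
  proof (intro allI impI)
    fix u :: "nat \<Rightarrow> complex" assume a: "fin_supp u \<and> u 0 = 0"
    show "(\<Sum>n. w (Suc n) * (cmod (u (Suc n)))\<^sup>2) \<le> (\<Sum>n. (cmod (u (Suc n) - u n))\<^sup>2)"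
      using ground[OF g0 gpos w_def, of u] a by linarith
  qed
  have HW: "hardy_weight w"
    unfolding hardy_weight_def
  proof (intro conjI allI impI)
    fix n :: nat assume "1 \<le> n"
    then have "0 \<le> (2 * g n - g (n - 1) - g (n + 1)) / g n" "w n = (2 * g n - g (n - 1) - g (n + 1)) / g n"
      using w_def superharm gpos by (auto intro: divide_nonneg_pos)
    then show "0 \<le> w n" by simp
  qed (use P2 in blast)
  have P3: "optimal_hardy_weight w" if ex: "\<exists>\<xi> :: nat \<Rightarrow> nat \<Rightarrow> real.
              (\<forall>N\<ge>1. finite {n. n \<ge> 1 \<and> \<xi> N n \<noteq> 0})
            \<and> (\<forall>N\<ge>1. \<forall>n\<ge>1. \<xi> N n \<le> \<xi> (Suc N) n)
            \<and> (\<forall>n\<ge>1. (\<lambda>N. \<xi> N n) \<longlonglongrightarrow> 1)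
            \<and> (\<lambda>N. \<Sum>n. g (n + 2) * g (n + 1) * (\<xi> N (n + 2) - \<xi> N (n + 1))\<^sup>2) \<longlonglongrightarrow> 0"
  proof -
    obtain \<xi> :: "nat \<Rightarrow> nat \<Rightarrow> real" where
      fin: "\<forall>N\<ge>1. finite {n. n \<ge> 1 \<and> \<xi> N n \<noteq> 0}"
      and lim1: "\<forall>n\<ge>1. (\<lambda>N. \<xi> N n) \<longlonglongrightarrow> 1"
      and limS: "(\<lambda>N. \<Sum>n. g (n + 2) * g (n + 1) * (\<xi> N (n + 2) - \<xi> N (n + 1))\<^sup>2) \<longlonglongrightarrow> 0"
      using ex by blast
    show ?thesis unfolding optimal_hardy_weight_def
    proof (intro conjI HW allI impI)
      fix w' :: "nat \<Rightarrow> real" and m :: nat assume hw: "hardy_weight w' \<and> (\<forall>n\<ge>1. w n \<le> w' n)" and m1: "1 \<le> m"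
      have le: "\<forall>n\<ge>1. w n \<le> w' n" using hw by blast
      have ineq: "(w' m - w m) * (g m * \<xi> N m)\<^sup>2
          \<le> (\<Sum>n. g (n + 2) * g (n + 1) * (\<xi> N (n + 2) - \<xi> N (n + 1))\<^sup>2)" if N1: "N \<ge> 1" for N
      proof -
        define u :: "nat \<Rightarrow> complex" where "u n = complex_of_real (if n = 0 then 0 else g n * \<xi> N n)" for n
        obtain M0 where M0: "{n. n \<ge> 1 \<and> \<xi> N n \<noteq> 0} \<subseteq> {..<M0}"
          using fin N1 finite_nat_iff_bounded by blast
        define M where "M = M0 + m"
        have uz: "u n = 0" if "n \<ge> M" for n
        proof -
          have n1: "n \<ge> 1" "n \<ge> M0" using that m1 unfolding M_def by auto
          have "\<xi> N n = 0"
          proof (rule ccontr)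
            assume "\<xi> N n \<noteq> 0"
            then have "n \<in> {..<M0}" using M0 n1 by blast
            then show False using n1 by simp
          qed
          then show ?thesis unfolding u_def by simp
        qed
        have u0: "u 0 = 0" by (simp add: u_def)
        have fs: "fin_supp u" unfolding fin_supp_def
          by (rule finite_subset[of _ "{..<M}"]) (use uz not_le in auto)
        have H: "(\<Sum>n. w' (Suc n) * (cmod (u (Suc n)))\<^sup>2) \<le> (\<Sum>n. (cmod (u (Suc n) - u n))\<^sup>2)"
          using hw fs u0 unfolding hardy_weight_def by blast
        have G: "(\<Sum>n. (cmod (u (Suc n) - u n))\<^sup>2)
             = (\<Sum>n. w (Suc n) * (cmod (u (Suc n)))\<^sup>2)
               + (\<Sum>n. (cmod (complex_of_real (sqrt (g (n + 1) / g (n + 2))) * u (n + 2)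
                          - complex_of_real (sqrt (g (n + 2) / g (n + 1))) * u (n + 1)))\<^sup>2)"
          using P1 fs u0 by blast
        have Tn: "(cmod (complex_of_real (sqrt (g (n + 1) / g (n + 2))) * u (n + 2)
                          - complex_of_real (sqrt (g (n + 2) / g (n + 1))) * u (n + 1)))\<^sup>2
              = g (n + 2) * g (n + 1) * (\<xi> N (n + 2) - \<xi> N (n + 1))\<^sup>2" for n
        proof -
          have g1: "g (n+1) > 0" and g2: "g (n+2) > 0" using gpos by auto
          define r where "r = sqrt (g (n+1) * g (n+2))"
          have a: "sqrt (g (n + 1) / g (n + 2)) * g (n+2) = r"
          proof -
            have "sqrt (g (n + 1) / g (n + 2)) * g (n+2) = sqrt (g (n + 1) / g (n + 2)) * sqrt (g (n+2) * g (n+2))"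
              using g2 by simp
            also have "\<dots> = r" unfolding r_def real_sqrt_mult[symmetric] using g2 by simp
            finally show ?thesis .
          qed
          have b: "sqrt (g (n + 2) / g (n + 1)) * g (n+1) = r"
          proof -
            have "sqrt (g (n + 2) / g (n + 1)) * g (n+1) = sqrt (g (n + 2) / g (n + 1)) * sqrt (g (n+1) * g (n+1))"
              using g1 by simp
            also have "\<dots> = r" unfolding r_def real_sqrt_mult[symmetric] using g1 by (simp add: mult.commute)
            finally show ?thesis .
          qed
          have rr: "r^2 = g (n+1) * g (n+2)" unfolding r_def using g1 g2 by simp
          have "complex_of_real (sqrt (g (n + 1) / g (n + 2))) * u (n + 2)
                          - complex_of_real (sqrt (g (n + 2) / g (n + 1))) * u (n + 1)
             = complex_of_real (r * (\<xi> N (n + 2) - \<xi> N (n + 1)))"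
          proof -
            have "complex_of_real (sqrt (g (n + 1) / g (n + 2))) * u (n + 2)
                          - complex_of_real (sqrt (g (n + 2) / g (n + 1))) * u (n + 1)
              = complex_of_real (sqrt (g (n + 1) / g (n + 2)) * g (n+2) * \<xi> N (n + 2)
                   - sqrt (g (n + 2) / g (n + 1)) * g (n+1) * \<xi> N (n + 1))"
              unfolding u_def by (simp add: mult.assoc)
            also have "\<dots> = complex_of_real (r * (\<xi> N (n + 2) - \<xi> N (n + 1)))"
              unfolding a b by (simp add: right_diff_distrib)
            finally show ?thesis .
          qed
          then have "(cmod (complex_of_real (sqrt (g (n + 1) / g (n + 2))) * u (n + 2)
                          - complex_of_real (sqrt (g (n + 2) / g (n + 1))) * u (n + 1)))\<^sup>2
              = (r * (\<xi> N (n + 2) - \<xi> N (n + 1)))\<^sup>2" by (simp only: norm_of_real power2_abs)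
          also have "\<dots> = g (n + 2) * g (n + 1) * (\<xi> N (n + 2) - \<xi> N (n + 1))\<^sup>2"
            unfolding power_mult_distrib rr by simp
          finally show ?thesis .
        qed
        have sW': "(\<Sum>n. w' (Suc n) * (cmod (u (Suc n)))\<^sup>2) = (\<Sum>n<M. w' (Suc n) * (cmod (u (Suc n)))\<^sup>2)"
          by (rule suminf_bounded_supp) (simp add: uz)
        have sW: "(\<Sum>n. w (Suc n) * (cmod (u (Suc n)))\<^sup>2) = (\<Sum>n<M. w (Suc n) * (cmod (u (Suc n)))\<^sup>2)"
          by (rule suminf_bounded_supp) (simp add: uz)
        have dif: "(\<Sum>n<M. (w' (Suc n) - w (Suc n)) * (cmod (u (Suc n)))\<^sup>2)
            \<le> (\<Sum>n. g (n + 2) * g (n + 1) * (\<xi> N (n + 2) - \<xi> N (n + 1))\<^sup>2)"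
          using H G sW sW' Tn by (simp add: left_diff_distrib sum_subtractf)
        have mM: "m - 1 \<in> {..<M}" using m1 unfolding M_def by auto
        have "(w' (Suc (m-1)) - w (Suc (m-1))) * (cmod (u (Suc (m-1))))\<^sup>2
              \<le> (\<Sum>n<M. (w' (Suc n) - w (Suc n)) * (cmod (u (Suc n)))\<^sup>2)"
          by (rule member_le_sum[OF mM]) (use le in auto)
        moreover have "Suc (m-1) = m" using m1 by simp
        moreover have "(cmod (u m))\<^sup>2 = (g m * \<xi> N m)\<^sup>2" proof -
          have "u m = complex_of_real (g m * \<xi> N m)" using m1 unfolding u_def by simp
          then show ?thesis by (simp only: norm_of_real power2_abs)
        qed
        ultimately show ?thesis using dif by simp
      qed
      have L1: "(\<lambda>N. (w' m - w m) * (g m * \<xi> N m)\<^sup>2) \<longlonglongrightarrow> (w' m - w m) * (g m * 1)\<^sup>2"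
        using lim1 m1 by (intro tendsto_intros) auto
      have "(w' m - w m) * (g m * 1)\<^sup>2 \<le> 0"
        by (rule LIMSEQ_le[OF L1 limS]) (use ineq in blast)
      moreover have "g m > 0" using gpos m1 by blast
      ultimately have "w' m \<le> w m"
        by (simp add: mult_le_0_iff)
      then show "w' m = w m" using le m1 by force
    qed
  qed
  show ?thesis using P1 P2 P3 by blast
qed

end
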